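(* Let $\Gamma=(Q,A,E,(\delta_e)_{e\in E})$ be an MEMDP, $q\in Q$, and $W$ a parity objective. Then $$\mathrm{val}^{\mathrm{uni}}_q(\Gamma,W)=\inf_{b\in\mathcal D(E)}\mathrm{val}^{\mathrm{pr}}_q(\Gamma,b,W).$$
   Context: $\mathcal D(X)$ is the set of distributions on $X$ (countable support, summing to 1). An MDP $G=(Q,A,\delta)$ has finite non-empty $Q,A$ and $\delta:Q\times A\to\mathcal D(Q)$; strategies are maps $\sigma:Q\cdot(A\cdot Q)^*\to\mathcal D(A)$, $\mathrm{Strat}(Q,A)$ is their set, and $\mathbb P^\sigma_q[G,\cdot]$ is the induced probability measure on infinite runs from $q$ (infinite state sequences measured by projection). A parity objective given by $f:Q\to\mathbb N$ is the set of infinite state sequences whose maximal label seen infinitely often is even. An MEMDP is $\Gamma=(Q,A,E,(\delta_e)_{e\in E})$ with $E$ finite non-empty and each $\Gamma[e]=(Q,A,\delta_e)$ an MDP. $\mathrm{val}^{\mathrm{uni}}_q(\Gamma,W)=\sup_\sigma\min_{e\in E}\mathbb P^\sigma_q[\Gamma[e],W]$; $\mathrm{val}^{\mathrm{pr}}_q(\Gamma,b,W)=\sup_\sigma\sum_{e\in E}b(e)\,\mathbb P^\sigma_q[\Gamma[e],W]$. *)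

theory Defs
  imports "HOL-Probability.Probability"
begin

(* An MDP over finite state type 'q and finite action type 'a is given by its
   transition function  \<delta> :: 'q \<Rightarrow> 'a \<Rightarrow> 'q pmf  (pmf = distribution with countable support).
   A history in Q(AQ)^* is represented as (q0, [(a0,q1),...,(a_{n-1},q_n)]). *)

type_synonym ('q,'a) hist = "'q \<times> ('a \<times> 'q) list"
type_synonym ('q,'a) strat = "('q,'a) hist \<Rightarrow> 'a pmf"

definition hlast :: "('q,'a) hist \<Rightarrow> 'q" where
  "hlast h = (if snd h = [] then fst h else snd (last (snd h)))"

definition hist_prob :: "('q \<Rightarrow> 'a \<Rightarrow> 'q pmf) \<Rightarrow> ('q,'a) strat \<Rightarrow> ('q,'a) hist \<Rightarrow> real" where
  "hist_prob \<delta> \<sigma> h =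
     (\<Prod>i<length (snd h).
        let hi = (fst h, take i (snd h)); (a, q') = snd h ! i
        in pmf (\<sigma> hi) a * pmf (\<delta> (hlast hi) a) q')"

(* probability of the cylinder of infinite state sequences starting with the
   finite state sequence xs, for runs from q (actions projected away) *)
definition cyl_prob :: "('q \<Rightarrow> 'a \<Rightarrow> 'q pmf) \<Rightarrow> ('q,'a) strat \<Rightarrow> 'q \<Rightarrow> 'q list \<Rightarrow> real" where
  "cyl_prob \<delta> \<sigma> q xs =
     (case xs of [] \<Rightarrow> 1
      | q0 # qs \<Rightarrow> (if q0 = q then
           (\<Sum>as\<in>{as. length as = length qs}. hist_prob \<delta> \<sigma> (q0, zip as qs))
         else 0))"

(* the induced probability measure P^\<sigma>_q[G,-] on infinite state sequences:
   the (unique) probability measure on the stream sigma-algebra with the above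
   cylinder probabilities *)
definition run_measure :: "('q \<Rightarrow> 'a \<Rightarrow> 'q pmf) \<Rightarrow> ('q,'a) strat \<Rightarrow> 'q \<Rightarrow> 'q stream measure" where
  "run_measure \<delta> \<sigma> q =
     (THE M. sets M = sets (stream_space (count_space UNIV)) \<and> prob_space M \<and>
        (\<forall>xs. emeasure M (sstart UNIV xs) = ennreal (cyl_prob \<delta> \<sigma> q xs)))"

definition Pr :: "('q \<Rightarrow> 'a \<Rightarrow> 'q pmf) \<Rightarrow> ('q,'a) strat \<Rightarrow> 'q \<Rightarrow> 'q stream set \<Rightarrow> real" where
  "Pr \<delta> \<sigma> q W = measure (run_measure \<delta> \<sigma> q) W"

definition parity :: "('q::finite \<Rightarrow> nat) \<Rightarrow> 'q stream set" where
  "parity f = {\<omega>. even (Max (f ` {x. \<exists>\<^sub>\<infinity>n. \<omega> !! n = x}))}"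

(* MEMDP: \<Gamma> :: 'e \<Rightarrow> 'q \<Rightarrow> 'a \<Rightarrow> 'q pmf, environment type 'e finite (non-empty) *)
definition val_uni :: "('e::finite \<Rightarrow> 'q \<Rightarrow> 'a \<Rightarrow> 'q pmf) \<Rightarrow> 'q \<Rightarrow> 'q stream set \<Rightarrow> real" where
  "val_uni \<Gamma> q W = (SUP \<sigma>. Min ((\<lambda>e. Pr (\<Gamma> e) \<sigma> q W) ` UNIV))"

definition val_pr :: "('e::finite \<Rightarrow> 'q \<Rightarrow> 'a \<Rightarrow> 'q pmf) \<Rightarrow> 'q \<Rightarrow> 'e pmf \<Rightarrow> 'q stream set \<Rightarrow> real" where
  "val_pr \<Gamma> q b W = (SUP \<sigma>. \<Sum>e\<in>UNIV. pmf b e * Pr (\<Gamma> e) \<sigma> q W)"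

end

theory Submission
  imports Defs
begin

definition kern :: "('q \<Rightarrow> 'a \<Rightarrow> 'q pmf) \<Rightarrow> ('q,'a) strat \<Rightarrow> ('q,'a) hist \<Rightarrow> ('a \<times> 'q) pmf" where
  "kern \<delta> \<sigma> h = bind_pmf (\<sigma> h) (\<lambda>a. map_pmf (Pair a) (\<delta> (hlast h) a))"

lemma pmf_kern: "pmf (kern \<delta> \<sigma> h) (a, q') = pmf (\<sigma> h) a * pmf (\<delta> (hlast h) a) q'"
proof -
  have "pmf (kern \<delta> \<sigma> h) (a, q') = measure_pmf.expectation (\<sigma> h)
          (\<lambda>x. pmf (map_pmf (Pair x) (\<delta> (hlast h) x)) (a, q'))"
    unfolding kern_def pmf_bind ..
  also have "\<dots> = (\<Sum>x\<in>{a}. pmf (map_pmf (Pair x) (\<delta> (hlast h) x)) (a, q') * pmf (\<sigma> h) x)"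
    by (rule integral_measure_pmf_real) (auto simp: pmf_eq_0_set_pmf)
  also have "\<dots> = pmf (\<sigma> h) a * pmf (\<delta> (hlast h) a) q'"
    by (simp add: pmf_map_inj' inj_on_def)
  finally show ?thesis .
qed

primrec hseq :: "(('q,'a) hist \<Rightarrow> 'a \<times> 'q) \<Rightarrow> 'q \<Rightarrow> nat \<Rightarrow> ('q,'a) hist" where
  "hseq \<omega> q 0 = (q, [])"
| "hseq \<omega> q (Suc n) = (q, snd (hseq \<omega> q n) @ [\<omega> (hseq \<omega> q n)])"

lemma hseq_fst[simp]: "fst (hseq \<omega> q n) = q"
  by (cases n) auto

lemma hseq_snd: "snd (hseq \<omega> q n) = map (\<lambda>j. \<omega> (hseq \<omega> q j)) [0..<n]"
  by (induction n) auto

lemma hseq_take: "j \<le> n \<Longrightarrow> hseq \<omega> q j = (q, take j (snd (hseq \<omega> q n)))"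
  by (simp add: hseq_snd take_map prod_eq_iff min_def)

lemma hseq_from_cond:
  assumes "\<forall>j<n. \<omega> (q, take j ys) = ys ! j" "length ys = n"
  shows "j \<le> n \<Longrightarrow> hseq \<omega> q j = (q, take j ys)"
proof (induction j)
  case 0 then show ?case by simp
next
  case (Suc j)
  then have "hseq \<omega> q j = (q, take j ys)" by simp
  moreover have "\<omega> (q, take j ys) = ys ! j" using assms Suc.prems by simp
  ultimately show ?case using Suc.prems assms(2) by (simp add: take_Suc_conv_app_nth)
qed

lemma hseq_eq_iff:
  "snd (hseq \<omega> q n) = ys \<longleftrightarrow> length ys = n \<and> (\<forall>j<n. \<omega> (q, take j ys) = ys ! j)"
proof
  assume H: "snd (hseq \<omega> q n) = ys"
  have "length ys = n" using H by (simp add: hseq_snd[symmetric] flip: H) (simp add: hseq_snd)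
  moreover have "\<omega> (q, take j ys) = ys ! j" if "j < n" for j
  proof -
    have "hseq \<omega> q j = (q, take j ys)" using hseq_take[of j n \<omega> q] that H by simp
    then show ?thesis using that H[symmetric] by (simp add: hseq_snd)
  qed
  ultimately show "length ys = n \<and> (\<forall>j<n. \<omega> (q, take j ys) = ys ! j)" by blast
next
  assume A: "length ys = n \<and> (\<forall>j<n. \<omega> (q, take j ys) = ys ! j)"
  then have "hseq \<omega> q n = (q, take n ys)" using hseq_from_cond[of n \<omega> q ys n] by simp
  then show "snd (hseq \<omega> q n) = ys" using A by simp
qed

lemma hlast_hseq_Suc: "hlast (hseq \<omega> q (Suc j)) = snd (\<omega> (hseq \<omega> q j))"
  by (simp add: hlast_def)

lemma hlast_hseq_0: "hlast (hseq \<omega> q 0) = q"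
  by (simp add: hlast_def)

definition Omega :: "('q \<Rightarrow> 'a \<Rightarrow> 'q pmf) \<Rightarrow> ('q,'a) strat \<Rightarrow> (('q,'a) hist \<Rightarrow> 'a \<times> 'q) measure" where
  "Omega \<delta> \<sigma> = PiM UNIV (\<lambda>h. measure_pmf (kern \<delta> \<sigma> h))"

definition Ev :: "'q \<Rightarrow> ('a \<times> 'q) list \<Rightarrow> (('q,'a) hist \<Rightarrow> 'a \<times> 'q) set" where
  "Ev q ys = {\<omega>. \<forall>j<length ys. \<omega> (q, take j ys) = ys ! j}"

lemma space_Omega[simp]: "space (Omega \<delta> \<sigma>) = UNIV"
  by (simp add: Omega_def space_PiM)

lemma prob_Omega: "prob_space (Omega \<delta> \<sigma>)"
  unfolding Omega_def by (rule prob_space_PiM) (rule prob_space_measure_pmf)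

lemma Ev_emb: "Ev q ys = prod_emb UNIV (\<lambda>h. measure_pmf (kern \<delta> \<sigma> h))
    ((\<lambda>j. (q, take j ys)) ` {..<length ys}) (PiE ((\<lambda>j. (q, take j ys)) ` {..<length ys}) (\<lambda>h. {ys ! length (snd h)}))"
  by (auto simp: Ev_def prod_emb_def space_PiM PiE_iff)

lemma Ev_sets: "Ev q ys \<in> sets (Omega \<delta> \<sigma>)"
  unfolding Omega_def Ev_emb[where \<delta>=\<delta> and \<sigma>=\<sigma>] by (rule sets_PiM_I) auto

lemma emeasure_Ev: "emeasure (Omega \<delta> \<sigma>) (Ev q ys) = ennreal (hist_prob \<delta> \<sigma> (q, ys))"
proof -
  let ?J = "(\<lambda>j. (q, take j ys)) ` {..<length ys}"
  have inj: "inj_on (\<lambda>j. (q, take j ys)) {..<length ys}"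
  proof (rule inj_onI)
    fix x y assume "x \<in> {..<length ys}" "y \<in> {..<length ys}" "(q, take x ys) = (q, take y ys)"
    then have "length (take x ys) = length (take y ys)" "x < length ys" "y < length ys" by auto
    then show "x = y" by simp
  qed
  have "emeasure (Omega \<delta> \<sigma>) (Ev q ys) = (\<Prod>h\<in>?J. emeasure (measure_pmf (kern \<delta> \<sigma> h)) {ys ! length (snd h)})"
    unfolding Omega_def Ev_emb[where \<delta>=\<delta> and \<sigma>=\<sigma>]
    by (rule emeasure_PiM_emb) (auto intro: prob_space_measure_pmf)
  also have "\<dots> = (\<Prod>j<length ys. ennreal (pmf (kern \<delta> \<sigma> (q, take j ys)) (ys ! j)))"
    by (subst prod.reindex[OF inj]) (auto simp: emeasure_pmf_single intro!: prod.cong)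
  also have "\<dots> = ennreal (\<Prod>j<length ys. pmf (kern \<delta> \<sigma> (q, take j ys)) (ys ! j))"
    by (simp add: prod_ennreal)
  also have "(\<Prod>j<length ys. pmf (kern \<delta> \<sigma> (q, take j ys)) (ys ! j)) = hist_prob \<delta> \<sigma> (q, ys)"
    unfolding hist_prob_def by (auto intro!: prod.cong simp: Let_def split_beta pmf_kern[symmetric])
  finally show ?thesis .
qed

lemma hseq_meas:
  fixes \<delta> :: "'q::finite \<Rightarrow> 'a::finite \<Rightarrow> 'q pmf"
  shows "(\<lambda>\<omega>. hseq \<omega> q n) \<in> measurable (Omega \<delta> \<sigma>) (count_space UNIV)"
proof (rule measurable_count_space_eq_countable[THEN iffD2], simp, safe)
  fix q' :: 'q and ys :: "('a \<times> 'q) list"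
  have "(\<lambda>\<omega>. hseq \<omega> q n) -` {(q', ys)} = (if q' = q \<and> length ys = n then Ev q ys else {})"
    by (auto simp: Ev_def prod_eq_iff hseq_eq_iff)
  then show "(\<lambda>\<omega>. hseq \<omega> q n) -` {(q', ys)} \<inter> space (Omega \<delta> \<sigma>) \<in> sets (Omega \<delta> \<sigma>)"
    by (simp add: Ev_sets)
qed simp

definition run :: "(('q,'a) hist \<Rightarrow> 'a \<times> 'q) \<Rightarrow> 'q \<Rightarrow> 'q stream" where
  "run \<omega> q = to_stream (\<lambda>n. hlast (hseq \<omega> q n))"

lemma run_meas:
  fixes \<delta> :: "'q::finite \<Rightarrow> 'a::finite \<Rightarrow> 'q pmf"
  shows "(\<lambda>\<omega>. run \<omega> q) \<in> measurable (Omega \<delta> \<sigma>) (stream_space (count_space UNIV))"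
proof -
  have "(\<lambda>\<omega> n. hlast (hseq \<omega> q n)) \<in> measurable (Omega \<delta> \<sigma>) (PiM UNIV (\<lambda>_. count_space UNIV))"
  proof (rule measurable_PiM_single')
    fix n :: nat
    show "(\<lambda>\<omega>. hlast (hseq \<omega> q n)) \<in> measurable (Omega \<delta> \<sigma>) (count_space UNIV)"
      by (rule measurable_compose[OF hseq_meas]) simp
  qed (simp add: space_PiM)
  then show ?thesis unfolding run_def by (rule measurable_compose) (rule measurable_to_stream)
qed

lemma run_snth: "run \<omega> q !! n = hlast (hseq \<omega> q n)"
  by (simp add: run_def to_stream_def)

lemma run_shd[simp]: "shd (run \<omega> q) = q"
  using run_snth[of \<omega> q 0] by (simp add: hlast_def)

lemma run_stl_snth[simp]: "stl (run \<omega> q) !! i = snd (\<omega> (hseq \<omega> q i))"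
  using run_snth[of \<omega> q "Suc i"] by (simp add: hlast_def)

lemma run_sstart:
  "run \<omega> q \<in> sstart UNIV (x # qs) \<longleftrightarrow> x = q \<and> (\<exists>as. length as = length qs \<and> \<omega> \<in> Ev q (zip as qs))"
proof -
  have "run \<omega> q \<in> sstart UNIV (x # qs) \<longleftrightarrow> (\<forall>i<Suc (length qs). run \<omega> q !! i = (x # qs) ! i)"
    using sstart_eq[of "run \<omega> q" UNIV "x # qs"] by simp
  also have "\<dots> \<longleftrightarrow> x = q \<and> (\<forall>j<length qs. snd (\<omega> (hseq \<omega> q j)) = qs ! j)"
    unfolding All_less_Suc2 by (auto simp: run_snth hlast_hseq_0 hlast_hseq_Suc)
  also have "(\<forall>j<length qs. snd (\<omega> (hseq \<omega> q j)) = qs ! j) \<longleftrightarrow>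
      (\<exists>as. length as = length qs \<and> \<omega> \<in> Ev q (zip as qs))"
  proof
    assume A: "\<forall>j<length qs. snd (\<omega> (hseq \<omega> q j)) = qs ! j"
    let ?ys = "snd (hseq \<omega> q (length qs))"
    have len: "length ?ys = length qs" by (simp add: hseq_snd)
    have "map snd ?ys = qs" using A by (auto simp: hseq_snd intro!: nth_equalityI)
    then have "zip (map fst ?ys) qs = ?ys" by (metis zip_map_fst_snd)
    moreover have "\<omega> \<in> Ev q ?ys" using hseq_eq_iff[of \<omega> q "length qs" ?ys] by (simp add: Ev_def)
    ultimately show "\<exists>as. length as = length qs \<and> \<omega> \<in> Ev q (zip as qs)"
      using len by (metis length_map)
  next
    assume "\<exists>as. length as = length qs \<and> \<omega> \<in> Ev q (zip as qs)"
    then obtain as where as: "length as = length qs" "\<omega> \<in> Ev q (zip as qs)" by blast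
    then have H: "snd (hseq \<omega> q (length qs)) = zip as qs"
      by (subst hseq_eq_iff) (simp add: Ev_def)
    show "\<forall>j<length qs. snd (\<omega> (hseq \<omega> q j)) = qs ! j"
    proof (intro allI impI)
      fix j assume j: "j < length qs"
      have "snd (snd (hseq \<omega> q (length qs)) ! j) = snd (zip as qs ! j)" using H by simp
      then show "snd (\<omega> (hseq \<omega> q j)) = qs ! j" using j as(1) by (simp add: hseq_snd)
    qed
  qed
  finally show ?thesis .
qed

lemma hist_prob_nonneg: "0 \<le> hist_prob \<delta> \<sigma> h"
  unfolding hist_prob_def by (auto intro!: prod_nonneg simp: Let_def split_beta)

lemma cyl_prob_nonneg: "0 \<le> cyl_prob \<delta> \<sigma> q xs"
  unfolding cyl_prob_def by (auto split: list.splits intro!: sum_nonneg hist_prob_nonneg)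

definition RM :: "('q \<Rightarrow> 'a \<Rightarrow> 'q pmf) \<Rightarrow> ('q,'a) strat \<Rightarrow> 'q \<Rightarrow> 'q stream measure" where
  "RM \<delta> \<sigma> q = distr (Omega \<delta> \<sigma>) (stream_space (count_space UNIV)) (\<lambda>\<omega>. run \<omega> q)"

lemma RM_props:
  fixes \<delta> :: "'q::finite \<Rightarrow> 'a::finite \<Rightarrow> 'q pmf"
  shows "sets (RM \<delta> \<sigma> q) = sets (stream_space (count_space UNIV))"
    and "prob_space (RM \<delta> \<sigma> q)"
    and "emeasure (RM \<delta> \<sigma> q) (sstart UNIV xs) = ennreal (cyl_prob \<delta> \<sigma> q xs)"
proof -
  show "sets (RM \<delta> \<sigma> q) = sets (stream_space (count_space UNIV))" by (simp add: RM_def)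
  show "prob_space (RM \<delta> \<sigma> q)"
    unfolding RM_def by (rule prob_space.prob_space_distr[OF prob_Omega run_meas])
  interpret O: prob_space "Omega \<delta> \<sigma>" by (rule prob_Omega)
  have em: "emeasure (RM \<delta> \<sigma> q) (sstart UNIV xs) = emeasure (Omega \<delta> \<sigma>) ((\<lambda>\<omega>. run \<omega> q) -` sstart UNIV xs)"
    unfolding RM_def by (subst emeasure_distr[OF run_meas sstart_sets]) simp
  show "emeasure (RM \<delta> \<sigma> q) (sstart UNIV xs) = ennreal (cyl_prob \<delta> \<sigma> q xs)"
  proof (cases xs)
    case Nil
    then show ?thesis using em O.emeasure_space_1 by (simp add: cyl_prob_def)
  next
    case (Cons x qs)
    show ?thesis
    proof (cases "x = q")
      case False
      have e: "(\<lambda>\<omega>. run \<omega> q) -` sstart UNIV xs = {}" using Cons False by (auto simp: run_sstart)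
      have "emeasure (RM \<delta> \<sigma> q) (sstart UNIV xs) = 0" unfolding em e by simp
      then show ?thesis using Cons False by (simp add: cyl_prob_def)
    next
      case True
      let ?A = "{as :: 'a list. length as = length qs}"
      have pre: "(\<lambda>\<omega>. run \<omega> q) -` sstart UNIV xs = (\<Union>as\<in>?A. Ev q (zip as qs))"
        unfolding Cons True using run_sstart[of _ q q qs] by blast
      have fin: "finite ?A" using finite_lists_length_eq[of "UNIV :: 'a set" "length qs"] by simp
      have disj: "disjoint_family_on (\<lambda>as. Ev q (zip as qs)) ?A"
      unfolding disjoint_family_on_def
      proof (intro ballI impI)
        fix as bs assume ab: "as \<in> ?A" "bs \<in> ?A" "as \<noteq> bs"
        show "Ev q (zip as qs) \<inter> Ev q (zip bs qs) = {}"
        proof (rule ccontr)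
          assume "Ev q (zip as qs) \<inter> Ev q (zip bs qs) \<noteq> {}"
          then obtain \<omega> where w: "\<omega> \<in> Ev q (zip as qs)" "\<omega> \<in> Ev q (zip bs qs)" by blast
          have "snd (hseq \<omega> q (length qs)) = zip as qs" using w(1) ab(1)
            by (subst hseq_eq_iff) (simp add: Ev_def)
          moreover have "snd (hseq \<omega> q (length qs)) = zip bs qs" using w(2) ab(2)
            by (subst hseq_eq_iff) (simp add: Ev_def)
          ultimately have "map fst (zip as qs) = map fst (zip bs qs)" by simp
          then show False using ab by simp
        qed
      qed
      have "emeasure (RM \<delta> \<sigma> q) (sstart UNIV xs) = (\<Sum>as\<in>?A. emeasure (Omega \<delta> \<sigma>) (Ev q (zip as qs)))"
        unfolding em pre by (rule sum_emeasure[symmetric]) (use fin disj Ev_sets in auto)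
      also have "\<dots> = (\<Sum>as\<in>?A. ennreal (hist_prob \<delta> \<sigma> (q, zip as qs)))"
        by (simp add: emeasure_Ev)
      also have "\<dots> = ennreal (\<Sum>as\<in>?A. hist_prob \<delta> \<sigma> (q, zip as qs))"
        by (rule sum_ennreal) (rule hist_prob_nonneg)
      finally show ?thesis using Cons True by (simp add: cyl_prob_def)
    qed
  qed
qed

lemma RM_unique:
  fixes \<delta> :: "'q::finite \<Rightarrow> 'a::finite \<Rightarrow> 'q pmf"
  assumes "sets M = sets (stream_space (count_space UNIV))" "prob_space M"
    "\<forall>xs. emeasure M (sstart UNIV xs) = ennreal (cyl_prob \<delta> \<sigma> q xs)"
  shows "M = RM \<delta> \<sigma> q"
  by (rule stream_space_eq_sstart[of UNIV]) (auto simp: assms RM_props)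

lemma run_measure_RM:
  fixes \<delta> :: "'q::finite \<Rightarrow> 'a::finite \<Rightarrow> 'q pmf"
  shows "run_measure \<delta> \<sigma> q = RM \<delta> \<sigma> q"
  unfolding run_measure_def
  by (rule the_equality) (use RM_props RM_unique in auto)


definition SP :: "('q,'a) strat \<Rightarrow> ('q,'a) hist \<Rightarrow> real" where
  "SP \<sigma> h = (\<Prod>i<length (snd h). pmf (\<sigma> (fst h, take i (snd h))) (fst (snd h ! i)))"

definition DP :: "('q \<Rightarrow> 'a \<Rightarrow> 'q pmf) \<Rightarrow> ('q,'a) hist \<Rightarrow> real" where
  "DP \<delta> h = (\<Prod>i<length (snd h). pmf (\<delta> (hlast (fst h, take i (snd h))) (fst (snd h ! i))) (snd (snd h ! i)))"

lemma hist_prob_SP_DP: "hist_prob \<delta> \<sigma> h = SP \<sigma> h * DP \<delta> h"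
  unfolding hist_prob_def SP_def DP_def prod.distrib[symmetric]
  by (auto intro!: prod.cong simp: Let_def split_beta)

lemma SP_nonneg: "0 \<le> SP \<sigma> h"
  unfolding SP_def by (auto intro!: prod_nonneg)

lemma SP_Nil[simp]: "SP \<sigma> (q0, []) = 1"
  by (simp add: SP_def)

lemma SP_snoc: "SP \<sigma> (q0, xs @ [x]) = SP \<sigma> (q0, xs) * pmf (\<sigma> (q0, xs)) (fst x)"
proof -
  have "SP \<sigma> (q0, xs @ [x]) = (\<Prod>i<Suc (length xs). pmf (\<sigma> (q0, take i (xs @ [x]))) (fst ((xs @ [x]) ! i)))"
    by (simp add: SP_def)
  also have "\<dots> = (\<Prod>i<length xs. pmf (\<sigma> (q0, take i (xs @ [x]))) (fst ((xs @ [x]) ! i))) * pmf (\<sigma> (q0, xs)) (fst x)"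
    by (simp add: prod.lessThan_Suc)
  also have "(\<Prod>i<length xs. pmf (\<sigma> (q0, take i (xs @ [x]))) (fst ((xs @ [x]) ! i))) = SP \<sigma> (q0, xs)"
    unfolding SP_def by (auto intro!: prod.cong simp: nth_append)
  finally show ?thesis .
qed

definition mixpmf :: "real \<Rightarrow> 'a pmf \<Rightarrow> 'a pmf \<Rightarrow> 'a pmf" where
  "mixpmf r A B = bind_pmf (bernoulli_pmf r) (\<lambda>b. if b then A else B)"

lemma pmf_mixpmf: "0 \<le> r \<Longrightarrow> r \<le> 1 \<Longrightarrow> pmf (mixpmf r A B) x = r * pmf A x + (1 - r) * pmf B x"
  unfolding mixpmf_def pmf_bind by (subst integral_bernoulli_pmf) auto

definition mixs :: "real \<Rightarrow> ('q,'a) strat \<Rightarrow> ('q,'a) strat \<Rightarrow> ('q,'a) strat" where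
  "mixs p \<sigma>1 \<sigma>2 h = (let Z = p * SP \<sigma>1 h + (1 - p) * SP \<sigma>2 h in
     if Z = 0 then \<sigma>1 h else mixpmf (p * SP \<sigma>1 h / Z) (\<sigma>1 h) (\<sigma>2 h))"

lemma SP_mixs:
  assumes p: "0 \<le> p" "p \<le> 1"
  shows "SP (mixs p \<sigma>1 \<sigma>2) (q0, xs) = p * SP \<sigma>1 (q0, xs) + (1 - p) * SP \<sigma>2 (q0, xs)"
proof (induction xs rule: rev_induct)
  case Nil then show ?case by simp
next
  case (snoc x xs)
  define h where "h = (q0, xs)"
  define S1 where "S1 = SP \<sigma>1 h"
  define S2 where "S2 = SP \<sigma>2 h"
  define Z where "Z = p * S1 + (1 - p) * S2"
  have S1: "0 \<le> S1" and S2: "0 \<le> S2" unfolding S1_def S2_def by (rule SP_nonneg)+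
  have IH: "SP (mixs p \<sigma>1 \<sigma>2) h = Z" using snoc unfolding h_def Z_def S1_def S2_def by simp
  have L: "SP (mixs p \<sigma>1 \<sigma>2) (q0, xs @ [x]) = Z * pmf (mixs p \<sigma>1 \<sigma>2 h) (fst x)"
    using IH by (simp add: SP_snoc h_def)
  have R: "p * SP \<sigma>1 (q0, xs @ [x]) + (1 - p) * SP \<sigma>2 (q0, xs @ [x]) =
      p * S1 * pmf (\<sigma>1 h) (fst x) + (1 - p) * S2 * pmf (\<sigma>2 h) (fst x)"
    by (simp add: SP_snoc h_def S1_def S2_def)
  show ?case
  proof (cases "Z = 0")
    case True
    have a: "p * S1 = 0" "(1 - p) * S2 = 0"
      using True p S1 S2 unfolding Z_def
      by (smt (verit) mult_nonneg_nonneg)+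
    show ?thesis unfolding L R True a by simp
  next
    case False
    have Zpos: "0 < Z" using False p S1 S2 unfolding Z_def
      by (smt (verit) mult_nonneg_nonneg)
    have r0: "0 \<le> p * S1 / Z" using p S1 Zpos by simp
    have r1: "p * S1 / Z \<le> 1" using p S2 Zpos unfolding Z_def
      by (simp add: divide_le_eq_1)
    have m: "mixs p \<sigma>1 \<sigma>2 h = mixpmf (p * S1 / Z) (\<sigma>1 h) (\<sigma>2 h)"
      using False unfolding mixs_def Let_def S1_def S2_def Z_def by simp
    have e1: "Z * (p * S1 / Z) = p * S1" using Zpos by simp
    have e2: "Z * (1 - p * S1 / Z) = (1 - p) * S2" using Zpos unfolding Z_def by (simp add: field_simps)
    have "Z * pmf (mixs p \<sigma>1 \<sigma>2 h) (fst x) =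
        (Z * (p * S1 / Z)) * pmf (\<sigma>1 h) (fst x) + (Z * (1 - p * S1 / Z)) * pmf (\<sigma>2 h) (fst x)"
      unfolding m pmf_mixpmf[OF r0 r1] by (simp add: algebra_simps)
    then show ?thesis unfolding L R e1 e2 .
  qed
qed

lemma hist_prob_mixs:
  assumes "0 \<le> p" "p \<le> 1"
  shows "hist_prob \<delta> (mixs p \<sigma>1 \<sigma>2) h = p * hist_prob \<delta> \<sigma>1 h + (1 - p) * hist_prob \<delta> \<sigma>2 h"
proof -
  have e: "SP (mixs p \<sigma>1 \<sigma>2) h = p * SP \<sigma>1 h + (1 - p) * SP \<sigma>2 h"
    using SP_mixs[OF assms, of \<sigma>1 \<sigma>2 "fst h" "snd h"] by simp
  show ?thesis unfolding hist_prob_SP_DP e by (simp add: algebra_simps)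
qed

lemma cyl_prob_mixs:
  assumes "0 \<le> p" "p \<le> 1"
  shows "cyl_prob \<delta> (mixs p \<sigma>1 \<sigma>2) q xs = p * cyl_prob \<delta> \<sigma>1 q xs + (1 - p) * cyl_prob \<delta> \<sigma>2 q xs"
  unfolding cyl_prob_def
  by (auto split: list.splits simp: hist_prob_mixs[OF assms] sum.distrib sum_distrib_left)


lemma Pr_RM:
  fixes \<delta> :: "'q::finite \<Rightarrow> 'a::finite \<Rightarrow> 'q pmf"
  shows "Pr \<delta> \<sigma> q W = measure (RM \<delta> \<sigma> q) W"
  by (simp add: Pr_def run_measure_RM)

lemma Pr_bounds:
  fixes \<delta> :: "'q::finite \<Rightarrow> 'a::finite \<Rightarrow> 'q pmf"
  shows "0 \<le> Pr \<delta> \<sigma> q W" "Pr \<delta> \<sigma> q W \<le> 1"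
proof -
  interpret prob_space "RM \<delta> \<sigma> q" by (rule RM_props)
  show "0 \<le> Pr \<delta> \<sigma> q W" "Pr \<delta> \<sigma> q W \<le> 1" by (simp_all add: Pr_RM)
qed

lemma Pr_mixs:
  fixes \<delta> :: "'q::finite \<Rightarrow> 'a::finite \<Rightarrow> 'q pmf"
  assumes p: "0 \<le> p" "p \<le> 1"
  shows "Pr \<delta> (mixs p \<sigma>1 \<sigma>2) q W = p * Pr \<delta> \<sigma>1 q W + (1 - p) * Pr \<delta> \<sigma>2 q W"
proof -
  let ?S = "stream_space (count_space (UNIV :: 'q set))"
  define M1 where "M1 = RM \<delta> \<sigma>1 q"
  define M2 where "M2 = RM \<delta> \<sigma>2 q"
  define N where "N = (\<lambda>b. if b then M1 else M2)"
  define MM where "MM = measure_pmf (bernoulli_pmf p) \<bind> N"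
  interpret P1: prob_space M1 unfolding M1_def by (rule RM_props)
  interpret P2: prob_space M2 unfolding M2_def by (rule RM_props)
  have s1: "sets M1 = sets ?S" and s2: "sets M2 = sets ?S" unfolding M1_def M2_def by (rule RM_props)+
  have meas: "N \<in> measurable (measure_pmf (bernoulli_pmf p)) (subprob_algebra ?S)"
    unfolding measurable_pmf_measure1 N_def
    using s1 s2 P1.subprob_space_axioms P2.subprob_space_axioms
    by (auto simp: space_subprob_algebra)
  have sMM: "sets MM = sets ?S"
    unfolding MM_def by (rule sets_bind_measurable[OF meas]) simp
  have pMM: "prob_space MM"
    unfolding MM_def
    by (rule measure_pmf.prob_space_bind[OF _ meas])
       (auto simp: N_def P1.prob_space_axioms P2.prob_space_axioms)
  have emMM: "emeasure MM A = emeasure M1 A * ennreal p + emeasure M2 A * ennreal (1 - p)"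
    if "A \<in> sets ?S" for A
    unfolding MM_def
    by (subst emeasure_bind[OF _ meas that]) (simp_all add: nn_integral_bernoulli_pmf p N_def)
  have "MM = RM \<delta> (mixs p \<sigma>1 \<sigma>2) q"
  proof (rule RM_unique[OF sMM pMM], intro allI)
    fix xs
    have "emeasure MM (sstart UNIV xs) =
        ennreal (cyl_prob \<delta> \<sigma>1 q xs) * ennreal p + ennreal (cyl_prob \<delta> \<sigma>2 q xs) * ennreal (1 - p)"
      using emMM[OF sstart_sets] unfolding M1_def M2_def by (simp add: RM_props(3))
    also have "\<dots> = ennreal (p * cyl_prob \<delta> \<sigma>1 q xs + (1 - p) * cyl_prob \<delta> \<sigma>2 q xs)"
      using p cyl_prob_nonneg[of \<delta> \<sigma>1 q xs] cyl_prob_nonneg[of \<delta> \<sigma>2 q xs]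
      by (simp add: ennreal_plus ennreal_mult mult.commute)
    finally show "emeasure MM (sstart UNIV xs) = ennreal (cyl_prob \<delta> (mixs p \<sigma>1 \<sigma>2) q xs)"
      by (simp add: cyl_prob_mixs[OF p])
  qed
  then have PM: "Pr \<delta> (mixs p \<sigma>1 \<sigma>2) q W = measure MM W" by (simp add: Pr_RM)
  show ?thesis
  proof (cases "W \<in> sets ?S")
    case True
    interpret PM: prob_space MM by (rule pMM)
    have "ennreal (measure MM W) = ennreal (p * measure M1 W + (1 - p) * measure M2 W)"
      using emMM[OF True] p
      by (simp add: PM.emeasure_eq_measure P1.emeasure_eq_measure P2.emeasure_eq_measure
          ennreal_plus ennreal_mult mult.commute)
    then have "measure MM W = p * measure M1 W + (1 - p) * measure M2 W"
      using p by (subst (asm) ennreal_inj) auto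
    then show ?thesis unfolding PM by (simp add: Pr_RM M1_def M2_def)
  next
    case False
    then show ?thesis unfolding PM using sMM s1 s2
      by (simp add: Pr_RM measure_notin_sets flip: M1_def M2_def)
  qed
qed


lemma minimax_abstract:
  fixes P :: "'s \<Rightarrow> 'e::finite \<Rightarrow> real"
  assumes bnd: "\<And>s e. 0 \<le> P s e" "\<And>s e. P s e \<le> 1"
      and mix: "\<And>s1 s2 u. 0 \<le> u \<Longrightarrow> u \<le> 1 \<Longrightarrow> \<exists>s. \<forall>e. P s e = u * P s1 e + (1 - u) * P s2 e"
  shows "(SUP s. Min (range (P s))) = (INF b. SUP s. \<Sum>e\<in>UNIV. pmf b e * P s e)"
proof -
  define v where "v = (SUP s. Min (range (P s)))"
  define val where "val b = (SUP s. \<Sum>e\<in>UNIV. pmf b e * P s e)" for b :: "'e pmf"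
  have fin: "finite (range (P s))" for s by simp
  have Min_le: "Min (range (P s)) \<le> P s e" for s e by (rule Min_le[OF fin]) simp
  have Min_le1: "Min (range (P s)) \<le> 1" for s using Min_le[of s undefined] bnd(2)[of s undefined] by linarith
  have Min_ge0: "0 \<le> Min (range (P s))" for s using bnd(1) by (subst Min_ge_iff) auto
  have bdd1: "bdd_above (range (\<lambda>s. Min (range (P s))))"
    using Min_le1 by (auto intro!: bdd_aboveI)
  have sum_b: "(\<Sum>e\<in>UNIV. pmf b e) = 1" for b :: "'e pmf" by (rule sum_pmf_eq_1) auto
  have avg: "Min (range (P s)) \<le> (\<Sum>e\<in>UNIV. pmf b e * P s e)" for s b
  proof -
    have "Min (range (P s)) = (\<Sum>e\<in>UNIV. pmf b e * Min (range (P s)))"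
      by (simp add: sum_distrib_right[symmetric] sum_b)
    also have "\<dots> \<le> (\<Sum>e\<in>UNIV. pmf b e * P s e)"
      by (intro sum_mono mult_left_mono Min_le) auto
    finally show ?thesis .
  qed
  have avg1: "(\<Sum>e\<in>UNIV. pmf b e * P s e) \<le> 1" for s b
  proof -
    have "(\<Sum>e\<in>UNIV. pmf b e * P s e) \<le> (\<Sum>e\<in>UNIV. pmf b e * 1)"
      by (intro sum_mono mult_left_mono bnd) auto
    then show ?thesis by (simp add: sum_b)
  qed
  have bdd2: "bdd_above (range (\<lambda>s. \<Sum>e\<in>UNIV. pmf b e * P s e))" for b
    using avg1 by (auto intro!: bdd_aboveI)
  have val_ge0: "0 \<le> val b" for b
    unfolding val_def using order_trans[OF Min_ge0[of undefined] avg[of undefined b]]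
    by (intro cSUP_upper2[OF bdd2, of undefined]) auto
  have easy: "v \<le> (INF b. val b)"
    unfolding v_def
  proof (rule cINF_greatest, simp)
    fix b
    show "(SUP s. Min (range (P s))) \<le> val b"
      unfolding val_def
      by (rule cSUP_mono[OF _ bdd2]) (use avg in auto)
  qed
  define vec :: "'s \<Rightarrow> real^'e" where "vec s = (\<chi> e. P s e)" for s
  define C where "C = range vec"
  define U :: "(real^'e) set" where "U = {x. \<forall>e. v < x $ e}"
  have convC: "convex C"
    unfolding convex_def C_def
  proof (safe)
    fix s1 s2 :: 's and u w :: real
    assume uw: "0 \<le> u" "0 \<le> w" "u + w = 1"
    then obtain s where s: "\<forall>e. P s e = u * P s1 e + (1 - u) * P s2 e" using mix[of u s1 s2] by auto
    have "u *\<^sub>R vec s1 + w *\<^sub>R vec s2 = vec s"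
      using s uw by (auto simp: vec_eq_iff vec_def)
    then show "u *\<^sub>R vec s1 + w *\<^sub>R vec s2 \<in> range vec" by simp
  qed
  have convU: "convex U"
    unfolding convex_def U_def
  proof (safe)
    fix x y :: "real^'e" and u w :: real and e
    assume x: "\<forall>e. v < x $ e" and y: "\<forall>e. v < y $ e" and uw: "0 \<le> u" "0 \<le> w" "u + w = 1"
    have a: "u * v \<le> u * x $ e" "w * v \<le> w * y $ e"
      using mult_left_mono[OF less_imp_le[OF x[rule_format, of e]] uw(1)]
        mult_left_mono[OF less_imp_le[OF y[rule_format, of e]] uw(2)] by auto
    have b: "u * v < u * x $ e \<or> w * v < w * y $ e"
    proof (cases "u = 0")
      case True then have "w = 1" using uw by simp
      then show ?thesis using y by simp
    next
      case False then have "0 < u" using uw by simp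
      then show ?thesis using x by simp
    qed
    have "v = u * v + w * v" using uw by (simp add: distrib_right[symmetric])
    then have "v < u * x $ e + w * y $ e" using a b by linarith
    then show "v < (u *\<^sub>R x + w *\<^sub>R y) $ e" by simp
  qed
  have disj: "C \<inter> U = {}"
  proof (rule ccontr)
    assume "C \<inter> U \<noteq> {}"
    then obtain s where "vec s \<in> U" unfolding C_def by auto
    then have lt: "\<forall>e. v < P s e" by (simp add: U_def vec_def)
    have "Min (range (P s)) \<in> range (P s)" by (rule Min_in[OF fin]) simp
    then obtain e where "P s e = Min (range (P s))" by (metis rangeE)
    moreover have "Min (range (P s)) \<le> v" unfolding v_def by (rule cSUP_upper[OF _ bdd1]) simp
    ultimately show False using lt by (metis not_less)
  qed
  have neC: "C \<noteq> {}" unfolding C_def by simp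
  have neU: "(\<chi> e. v + 1) \<in> U" by (simp add: U_def)
  obtain a c where a0: "a \<noteq> 0" and aC: "\<forall>x\<in>C. a \<bullet> x \<le> c" and aU: "\<forall>x\<in>U. c \<le> a \<bullet> x"
    using separating_hyperplane_sets[OF convC convU neC _ disj] neU by blast
  have inner_eq: "a \<bullet> x = (\<Sum>e\<in>UNIV. a $ e * x $ e)" for x by (simp add: inner_vec_def)
  have a_nonneg: "0 \<le> a $ k" for k
  proof (rule ccontr)
    assume neg: "\<not> 0 \<le> a $ k"
    define A1 where "A1 = (\<Sum>e\<in>UNIV. a $ e * (v + 1))"
    define s where "s = \<bar>A1 - c\<bar> / (- a $ k) + 1"
    have s0: "0 \<le> s" using neg by (simp add: s_def)
    define y :: "real^'e" where "y = (\<chi> e. v + 1 + (if e = k then s else 0))"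
    have "y \<in> U" using s0 by (simp add: U_def y_def)
    then have "c \<le> a \<bullet> y" using aU by blast
    also have "a \<bullet> y = A1 + a $ k * s"
    proof -
      have "a $ e * y $ e = a $ e * (v + 1) + (if e = k then a $ k * s else 0)" for e
        by (simp add: y_def algebra_simps)
      then have "a \<bullet> y = (\<Sum>e\<in>UNIV. a $ e * (v + 1) + (if e = k then a $ k * s else 0))"
        unfolding inner_eq by simp
      also have "\<dots> = A1 + a $ k * s" unfolding sum.distrib A1_def by simp
      finally show ?thesis .
    qed
    also have "a $ k * s = - \<bar>A1 - c\<bar> + a $ k" using neg by (simp add: s_def field_simps)
    finally show False using neg by linarith
  qed
  define A where "A = (\<Sum>e\<in>UNIV. a $ e)"
  have A0: "0 < A"
  proof -
    obtain k where "a $ k \<noteq> 0" using a0 by (auto simp: vec_eq_iff)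
    then have "0 < a $ k" using a_nonneg[of k] by simp
    then show ?thesis unfolding A_def by (intro sum_pos2[of UNIV k]) (auto intro: a_nonneg)
  qed
  have bound: "(\<Sum>e\<in>UNIV. a $ e * P s e) \<le> v * A" for s
  proof (rule field_le_epsilon)
    fix \<epsilon> :: real assume \<epsilon>: "0 < \<epsilon>"
    define y :: "real^'e" where "y = (\<chi> e. v + \<epsilon> / A)"
    have "y \<in> U" using \<epsilon> A0 by (simp add: U_def y_def)
    then have "c \<le> a \<bullet> y" using aU by blast
    also have "a \<bullet> y = (v + \<epsilon> / A) * A" by (simp add: inner_eq y_def A_def sum_distrib_right[symmetric] mult.commute)
    also have "\<dots> = v * A + \<epsilon>" using A0 by (simp add: field_simps)
    finally have "c \<le> v * A + \<epsilon>" .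
    moreover have "a \<bullet> vec s \<le> c" using aC by (simp add: C_def)
    ultimately show "(\<Sum>e\<in>UNIV. a $ e * P s e) \<le> v * A + \<epsilon>" by (simp add: inner_eq vec_def)
  qed
  define b0 where "b0 = embed_pmf (\<lambda>e. a $ e / A)"
  have pb0: "pmf b0 e = a $ e / A" for e
    unfolding b0_def
  proof (rule pmf_embed_pmf)
    show "0 \<le> a $ e / A" for e using a_nonneg[of e] A0 by simp
    have "(\<integral>\<^sup>+ x. ennreal (a $ x / A) \<partial>count_space UNIV) = (\<Sum>x\<in>UNIV. ennreal (a $ x / A))"
      by (simp add: nn_integral_count_space_finite)
    also have "\<dots> = ennreal (\<Sum>x\<in>UNIV. a $ x / A)"
      by (rule sum_ennreal) (use a_nonneg A0 in simp)
    also have "(\<Sum>x\<in>UNIV. a $ x / A) = 1" using A0 by (simp add: sum_divide_distrib[symmetric] A_def)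
    finally show "(\<integral>\<^sup>+ x. ennreal (a $ x / A) \<partial>count_space UNIV) = 1" by simp
  qed
  have "val b0 \<le> v"
    unfolding val_def
  proof (rule cSUP_least, simp)
    fix s
    have "(\<Sum>e\<in>UNIV. pmf b0 e * P s e) = (\<Sum>e\<in>UNIV. a $ e * P s e) / A"
      by (simp add: pb0 sum_divide_distrib)
    also have "\<dots> \<le> v" using bound[of s] A0 by (simp add: pos_divide_le_eq)
    finally show "(\<Sum>e\<in>UNIV. pmf b0 e * P s e) \<le> v" .
  qed
  moreover have "(INF b. val b) \<le> val b0"
    by (rule cINF_lower) (auto intro!: bdd_belowI val_ge0)
  ultimately have "(INF b. val b) \<le> v" by linarith
  with easy show ?thesis unfolding v_def val_def by linarith
qed


theorem mainTheorem5:
  fixes \<Gamma> :: "'e::finite \<Rightarrow> 'q::finite \<Rightarrow> 'a::finite \<Rightarrow> 'q pmf"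
    and q :: 'q and f :: "'q \<Rightarrow> nat"
  shows "val_uni \<Gamma> q (parity f) = (INF b. val_pr \<Gamma> q b (parity f))"
proof -
  have "(SUP \<sigma>. Min (range (\<lambda>e. Pr (\<Gamma> e) \<sigma> q (parity f)))) =
        (INF b. SUP \<sigma>. \<Sum>e\<in>UNIV. pmf b e * Pr (\<Gamma> e) \<sigma> q (parity f))"
  proof (rule minimax_abstract)
    show "\<And>s e. 0 \<le> Pr (\<Gamma> e) s q (parity f)" "\<And>s e. Pr (\<Gamma> e) s q (parity f) \<le> 1"
      by (rule Pr_bounds)+
    show "\<exists>s. \<forall>e. Pr (\<Gamma> e) s q (parity f) = u * Pr (\<Gamma> e) s1 q (parity f) + (1 - u) * Pr (\<Gamma> e) s2 q (parity f)"
      if "0 \<le> u" "u \<le> 1" for s1 s2 u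
      using Pr_mixs[OF that] by blast
  qed
  then show ?thesis by (simp add: val_uni_def val_pr_def)
qed


end
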